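(* Every generalized Krull domain (in particular, every Noetherian integrally closed domain) is perinormal.
   Context: All rings are commutative with identity; "local" means having a unique maximal ideal; an overring of a domain $R$ is a ring between $R$ and its fraction field. A ring extension $A \subseteq B$ satisfies going-down if whenever $\mathfrak{p} \subset \mathfrak{q}$ are primes of $A$ and $Q$ is a prime of $B$ with $Q \cap A = \mathfrak{q}$, there is a prime $P \subseteq Q$ of $B$ with $P \cap A = \mathfrak{p}$. A domain $R$ is perinormal if every local overring $S$ of $R$ such that $R \subseteq S$ satisfies going-down is a localization of $R$. A ring $R$ satisfies (R$_1$) if $R_P$ is a valuation domain for every height one prime $P$ of $R$. Let $\operatorname{Spec}^1(R)$ denote the set of height one primes of $R$. A domain $R$ is a generalized Krull domain if (1) $R = \bigcap_{\mathfrak{p} \in \operatorname{Spec}^1(R)} R_{\mathfrak{p}}$, (2) every nonzero $r \in R$ lies in only finitely many height one primes, and (3) $R$ satisfies (R$_1$). *)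

theory Defs
  imports Main
begin

text \<open>A domain is modelled as a subring R of a field (of type 'a); its fraction field
is the set of quotients a/b with a, b in R, b nonzero.\<close>

definition subring :: "'a::field set \<Rightarrow> bool" where
  "subring R \<longleftrightarrow> 0 \<in> R \<and> 1 \<in> R \<and> (\<forall>x\<in>R. \<forall>y\<in>R. x + y \<in> R \<and> x - y \<in> R \<and> x * y \<in> R)"

definition frac :: "'a::field set \<Rightarrow> 'a set" where
  "frac R = {a / b | a b. a \<in> R \<and> b \<in> R \<and> b \<noteq> 0}"

definition ideal :: "'a::field set \<Rightarrow> 'a set \<Rightarrow> bool" where
  "ideal R I \<longleftrightarrow> I \<subseteq> R \<and> 0 \<in> I \<and> (\<forall>x\<in>I. \<forall>y\<in>I. x + y \<in> I) \<and> (\<forall>r\<in>R. \<forall>x\<in>I. r * x \<in> I)"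

definition prime_ideal :: "'a::field set \<Rightarrow> 'a set \<Rightarrow> bool" where
  "prime_ideal R P \<longleftrightarrow> ideal R P \<and> 1 \<notin> P \<and> (\<forall>a\<in>R. \<forall>b\<in>R. a * b \<in> P \<longrightarrow> a \<in> P \<or> b \<in> P)"

definition maximal_ideal :: "'a::field set \<Rightarrow> 'a set \<Rightarrow> bool" where
  "maximal_ideal R m \<longleftrightarrow> ideal R m \<and> 1 \<notin> m \<and>
     (\<forall>J. ideal R J \<and> 1 \<notin> J \<and> m \<subseteq> J \<longrightarrow> J = m)"

definition local_ring :: "'a::field set \<Rightarrow> bool" where
  "local_ring S \<longleftrightarrow> (\<exists>!m. maximal_ideal S m)"

definition overring :: "'a::field set \<Rightarrow> 'a set \<Rightarrow> bool" where
  "overring R S \<longleftrightarrow> subring S \<and> R \<subseteq> S \<and> S \<subseteq> frac R"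

definition going_down :: "'a::field set \<Rightarrow> 'a set \<Rightarrow> bool" where
  "going_down A B \<longleftrightarrow>
     (\<forall>p q Q. prime_ideal A p \<and> prime_ideal A q \<and> p \<subset> q \<and> prime_ideal B Q \<and> Q \<inter> A = q \<longrightarrow>
        (\<exists>P. prime_ideal B P \<and> P \<subseteq> Q \<and> P \<inter> A = p))"

definition mult_set :: "'a::field set \<Rightarrow> 'a set \<Rightarrow> bool" where
  "mult_set R M \<longleftrightarrow> M \<subseteq> R \<and> 1 \<in> M \<and> 0 \<notin> M \<and> (\<forall>x\<in>M. \<forall>y\<in>M. x * y \<in> M)"

text \<open>Localization R_M, realised inside the fraction field.\<close>
definition loc :: "'a::field set \<Rightarrow> 'a set \<Rightarrow> 'a set" where
  "loc R M = {a / s | a s. a \<in> R \<and> s \<in> M}"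

definition perinormal :: "'a::field set \<Rightarrow> bool" where
  "perinormal R \<longleftrightarrow>
     (\<forall>S. overring R S \<and> local_ring S \<and> going_down R S \<longrightarrow> (\<exists>M. mult_set R M \<and> S = loc R M))"

definition height_one_prime :: "'a::field set \<Rightarrow> 'a set \<Rightarrow> bool" where
  "height_one_prime R P \<longleftrightarrow> prime_ideal R P \<and> P \<noteq> {0} \<and>
     (\<forall>Q. prime_ideal R Q \<and> Q \<subseteq> P \<longrightarrow> Q = {0} \<or> Q = P)"

definition valuation_domain :: "'a::field set \<Rightarrow> bool" where
  "valuation_domain V \<longleftrightarrow> subring V \<and> (\<forall>x\<in>frac V. x \<in> V \<or> inverse x \<in> V)"

definition generalized_krull :: "'a::field set \<Rightarrow> bool" where
  "generalized_krull R \<longleftrightarrow>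
     R = frac R \<inter> (\<Inter>P\<in>{P. height_one_prime R P}. loc R (R - P)) \<and>
     (\<forall>r\<in>R. r \<noteq> 0 \<longrightarrow> finite {P. height_one_prime R P \<and> r \<in> P}) \<and>
     (\<forall>P. height_one_prime R P \<longrightarrow> valuation_domain (loc R (R - P)))"

end

theory Submission
  imports Defs
begin

lemma sr: assumes "subring R" "x \<in> R" "y \<in> R"
  shows "x + y \<in> R" "x - y \<in> R" "x * y \<in> R"
  using assms unfolding subring_def by auto

lemma sr01: "subring R \<Longrightarrow> 0 \<in> R" "subring R \<Longrightarrow> 1 \<in> R"
  unfolding subring_def by auto

lemma sr_pow: "subring R \<Longrightarrow> x \<in> R \<Longrightarrow> x ^ n \<in> R"
  by (induction n) (auto intro: sr sr01)

lemma sr_prod: assumes "subring R" shows "finite A \<Longrightarrow> (\<forall>i\<in>A. f i \<in> R) \<Longrightarrow> prod f A \<in> R"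
  by (induction A rule: finite_induct) (auto intro: sr sr01 assms)

lemma prime_pow_notin: assumes "prime_ideal R p" "subring R" "s \<in> R" "s \<notin> p"
  shows "s ^ n \<notin> p"
proof (induction n)
  case 0 then show ?case using assms unfolding prime_ideal_def by auto
next
  case (Suc n)
  then show ?case using assms sr_pow[OF assms(2,3), of n] unfolding prime_ideal_def by auto
qed

lemma prime_prod_notin: assumes "prime_ideal R p" "subring R" "finite A" "\<forall>i\<in>A. f i \<in> R - p"
  shows "prod f A \<in> R - p"
  using assms(3,4)
proof (induction A rule: finite_induct)
  case empty then show ?case using assms unfolding prime_ideal_def by (auto intro: sr01)
next
  case (insert x F)
  then have "f x \<in> R" "f x \<notin> p" "prod f F \<in> R" "prod f F \<notin> p" by auto
  then show ?case using insert assms unfolding prime_ideal_def by (auto intro: sr)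
qed

lemma mem_loc: "x \<in> loc R M \<longleftrightarrow> (\<exists>a s. a \<in> R \<and> s \<in> M \<and> x = a / s)"
  unfolding loc_def by auto

lemma R_sub_loc: assumes "subring R" "1 \<in> M" shows "R \<subseteq> loc R M"
proof
  fix r assume "r \<in> R" then show "r \<in> loc R M" using assms unfolding mem_loc by (metis div_by_1)
qed

lemma mulV: "subring V \<Longrightarrow> x \<in> V \<Longrightarrow> y \<in> V \<Longrightarrow> z = x * y \<Longrightarrow> z \<in> V"
  using sr(3) by blast

lemma fracI: "a \<in> R \<Longrightarrow> b \<in> R \<Longrightarrow> b \<noteq> 0 \<Longrightarrow> a / b \<in> frac R"
  unfolding frac_def by blast

lemma ideal_add: "ideal R I \<Longrightarrow> x \<in> I \<Longrightarrow> y \<in> I \<Longrightarrow> x + y \<in> I"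
  unfolding ideal_def by blast

lemma ideal_mul: "ideal R I \<Longrightarrow> r \<in> R \<Longrightarrow> x \<in> I \<Longrightarrow> r * x \<in> I"
  unfolding ideal_def by blast

lemma ideal_sub: "ideal R I \<Longrightarrow> x \<in> I \<Longrightarrow> x \<in> R"
  unfolding ideal_def by blast

lemma zero_in_ideal: "ideal R I \<Longrightarrow> 0 \<in> I" unfolding ideal_def by auto

lemma frac_sub: assumes "subring R" "R \<subseteq> V" "x \<in> frac R" shows "x \<in> frac V"
  using assms unfolding frac_def by auto

lemma key1:
  assumes R: "subring R" and P: "prime_ideal R P" and val: "valuation_domain (loc R (R - P))"
    and Q: "ideal S Q" and RS: "R \<subseteq> S" and Sf: "S \<subseteq> frac R" and QR: "Q \<inter> R = P"
    and x: "x \<in> S"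
  shows "x \<in> loc R (R - P)"
proof -
  let ?V = "loc R (R - P)"
  have P1: "1 \<notin> P" "0 \<in> P" "P \<subseteq> R" using P unfolding prime_ideal_def ideal_def by auto
  have RV: "R \<subseteq> ?V" using R_sub_loc[OF R] P1 sr01[OF R] by auto
  have "x \<in> frac ?V" using frac_sub[OF R RV] x Sf by auto
  then have "x \<in> ?V \<or> inverse x \<in> ?V" using val unfolding valuation_domain_def by auto
  then show ?thesis
  proof
    assume "inverse x \<in> ?V"
    then obtain c u where cu: "c \<in> R" "u \<in> R - P" "inverse x = c / u" unfolding mem_loc by auto
    show ?thesis
    proof (cases "x = 0")
      case True then show ?thesis using RV sr01[OF R] by auto
    next
      case False
      have u0: "u \<noteq> 0" using cu P1 by auto
      have c0: "c \<noteq> 0" using cu False u0 by auto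
      have ux: "u = x * c" using cu False u0 c0 by (simp add: field_simps)
      show ?thesis
      proof (cases "c \<in> P")
        case True
        then have "c \<in> Q" using QR by auto
        then have "x * c \<in> Q" using Q x unfolding ideal_def by auto
        then have "u \<in> P" using ux QR cu by auto
        then show ?thesis using cu by auto
      next
        case False
        have "x = u / c" using ux c0 by simp
        then show ?thesis using cu False unfolding mem_loc by auto
      qed
    qed
  qed
qed

lemma key2:
  assumes R: "subring R" and P: "height_one_prime R P" and val: "valuation_domain (loc R (R - P))"
    and s: "s \<in> P" "s \<noteq> 0" and x: "x \<in> frac R"
  shows "\<exists>k. s ^ k * x \<in> loc R (R - P)"
proof (rule ccontr)
  assume H: "\<not> ?thesis"
  let ?V = "loc R (R - P)"
  have Pp: "prime_ideal R P" using P unfolding height_one_prime_def by auto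
  have P1: "1 \<notin> P" "0 \<in> P" "P \<subseteq> R" using Pp unfolding prime_ideal_def ideal_def by auto
  have PI: "\<And>r y. r \<in> R \<Longrightarrow> y \<in> P \<Longrightarrow> r * y \<in> P" using Pp unfolding prime_ideal_def ideal_def by auto
  have RV: "R \<subseteq> ?V" using R_sub_loc[OF R] P1 sr01[OF R] by auto
  have V: "subring ?V" using val unfolding valuation_domain_def by auto
  have sR: "s \<in> R" using s P1 by auto
  have inv: "\<And>u. u \<in> R - P \<Longrightarrow> 1 / u \<in> ?V" using sr01[OF R] unfolding mem_loc by auto
  have ns: "1 / s \<notin> ?V"
  proof
    assume "1 / s \<in> ?V"
    then obtain c u where cu: "c \<in> R" "u \<in> R - P" "1 / s = c / u" unfolding mem_loc by auto
    have "u \<noteq> 0" using cu P1 by auto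
    then have "u = c * s" using cu s by (simp add: field_simps)
    then have "u \<in> P" using PI cu s by auto
    then show False using cu by auto
  qed
  have valx: "\<And>y. y \<in> frac R \<Longrightarrow> y \<in> ?V \<or> inverse y \<in> ?V"
    using val frac_sub[OF R RV] unfolding valuation_domain_def by auto
  obtain a b where ab: "a \<in> R" "b \<in> R" "b \<noteq> 0" "x = a / b" using x unfolding frac_def by auto
  have a0: "a \<noteq> 0"
  proof
    assume "a = 0" then have "s ^ 0 * x \<in> ?V" using ab RV sr01[OF R] by auto
    then show False using H by blast
  qed
  have fr: "s ^ k * x \<in> frac R" for k
  proof -
    have "s ^ k * x = (s ^ k * a) / b" using ab by simp
    moreover have "s ^ k * a \<in> R" using ab sr_pow[OF R sR] sr[OF R] by auto
    ultimately show ?thesis using ab unfolding frac_def by blast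
  qed
  have binv: "\<And>k. b / (s ^ k * a) \<in> ?V"
  proof -
    fix k
    have "inverse (s ^ k * x) \<in> ?V" using valx[OF fr[of k]] H by blast
    then show "b / (s ^ k * a) \<in> ?V" using ab by (simp add: field_simps)
  qed
  obtain c u where cu: "c \<in> R" "u \<in> R - P" "b / a = c / u" using binv[of 0] unfolding mem_loc by auto
  have u0: "u \<noteq> 0" using cu P1 by auto
  have c0: "c \<noteq> 0" using cu u0 ab a0 by auto
  define J where "J = {r \<in> R. \<forall>k. r / s ^ k \<in> ?V}"
  have cJ: "c \<in> J"
  proof -
    have "\<And>k. c / s ^ k = u * (b / (s ^ k * a))" using cu u0 a0 s by (simp add: field_simps)
    moreover have "u * (b / (s ^ k * a)) \<in> ?V" for k
    proof (rule sr(3)[OF V])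
      show "u \<in> ?V" using RV cu by auto
      show "b / (s ^ k * a) \<in> ?V" by (rule binv)
    qed
    ultimately show ?thesis unfolding J_def using cu by auto
  qed
  have ns': "\<And>r. r \<in> R - P \<Longrightarrow> r / s \<notin> ?V"
  proof
    fix r assume r: "r \<in> R - P" "r / s \<in> ?V"
    have "r \<noteq> 0" using r P1 by auto
    then have "1 / s = (r / s) * (1 / r)" using s by simp
    moreover have "1 / r \<in> ?V" using r inv by auto
    ultimately have "1 / s \<in> ?V" using mulV[OF V] r by blast
    then show False using ns by simp
  qed
  have JP: "J \<subseteq> P"
  proof
    fix r assume "r \<in> J"
    then have "r \<in> R" "r / s \<in> ?V" unfolding J_def by (auto dest: spec[of _ 1])
    then show "r \<in> P" using ns' by auto
  qed
  have Jprime: "prime_ideal R J"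
  proof -
    have "ideal R J"
      unfolding ideal_def
    proof (intro conjI ballI)
      show "J \<subseteq> R" unfolding J_def by auto
      show "0 \<in> J" unfolding J_def using sr01[OF R] sr01[OF V] by auto
    next
      fix y z assume "y \<in> J" "z \<in> J"
      then show "y + z \<in> J" unfolding J_def using sr[OF R] sr[OF V] by (auto simp: add_divide_distrib)
    next
      fix r y assume "r \<in> R" "y \<in> J"
      have "(r * y) / s ^ k \<in> ?V" for k
      proof (rule mulV[OF V])
        show "r \<in> ?V" using RV \<open>r \<in> R\<close> by auto
        show "y / s ^ k \<in> ?V" using \<open>y \<in> J\<close> unfolding J_def by auto
      qed simp
      then show "r * y \<in> J" unfolding J_def using sr[OF R] \<open>r \<in> R\<close> \<open>y \<in> J\<close> J_def by auto
    qed
    moreover have "1 \<notin> J"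
    proof
      assume "1 \<in> J" then have "1 / s ^ 1 \<in> ?V" unfolding J_def by blast
      then show False using ns by simp
    qed
    moreover have "\<forall>a\<in>R. \<forall>b\<in>R. a * b \<in> J \<longrightarrow> a \<in> J \<or> b \<in> J"
    proof (intro ballI impI, rule ccontr)
      fix r1 r2 assume r: "r1 \<in> R" "r2 \<in> R" "r1 * r2 \<in> J" "\<not> (r1 \<in> J \<or> r2 \<in> J)"
      then obtain i j where ij: "r1 / s ^ i \<notin> ?V" "r2 / s ^ j \<notin> ?V" unfolding J_def by auto
      have r10: "r1 \<noteq> 0" "r2 \<noteq> 0" using ij sr01[OF V] by auto
      have fr1: "r1 / s ^ i \<in> frac R" using r sr_pow[OF R sR] s by (intro fracI) auto
      have fr2: "r2 / s ^ j \<in> frac R" using r sr_pow[OF R sR] s by (intro fracI) auto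
      have i1: "s ^ i / r1 \<in> ?V" using valx[OF fr1] ij by (simp add: inverse_eq_divide)
      have i2: "s ^ j / r2 \<in> ?V" using valx[OF fr2] ij by (simp add: inverse_eq_divide)
      have i3: "(r1 * r2) / s ^ (i + j + 1) \<in> ?V" using r(3) unfolding J_def by blast
      have "1 / s = (s ^ i / r1) * (s ^ j / r2) * ((r1 * r2) / s ^ (i + j + 1))"
        using r10 s by (simp add: field_simps power_add)
      moreover have "(s ^ i / r1) * (s ^ j / r2) \<in> ?V" using mulV[OF V i1 i2] by blast
      ultimately have "1 / s \<in> ?V" using mulV[OF V _ i3] by blast
      then show False using ns by simp
    qed
    ultimately show ?thesis unfolding prime_ideal_def by auto
  qed
  have "J = P" using P Jprime JP cJ c0 unfolding height_one_prime_def by blast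
  then have "s / s ^ 2 \<in> ?V" using s unfolding J_def by blast
  moreover have "s / s ^ 2 = 1 / s" using s by (simp add: power2_eq_square)
  ultimately show False using ns by simp
qed

lemma max_prime: assumes S: "subring S" and m: "maximal_ideal S m" shows "prime_ideal S m"
proof -
  have mi: "ideal S m" "1 \<notin> m" using m unfolding maximal_ideal_def by auto
  have mmax: "\<And>J. ideal S J \<Longrightarrow> 1 \<notin> J \<Longrightarrow> m \<subseteq> J \<Longrightarrow> J = m" using m unfolding maximal_ideal_def by blast
  have "\<forall>a\<in>S. \<forall>b\<in>S. a * b \<in> m \<longrightarrow> a \<in> m \<or> b \<in> m"
  proof (intro ballI impI, rule ccontr)
    fix a b assume ab: "a \<in> S" "b \<in> S" "a * b \<in> m" "\<not> (a \<in> m \<or> b \<in> m)"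
    define J where "J = {n + a * c | n c. n \<in> m \<and> c \<in> S}"
    have Jmem: "\<And>n c. n \<in> m \<Longrightarrow> c \<in> S \<Longrightarrow> n + a * c \<in> J" unfolding J_def by blast
    have Jel: "\<And>y. y \<in> J \<Longrightarrow> \<exists>n c. n \<in> m \<and> c \<in> S \<and> y = n + a * c" unfolding J_def by blast
    have mS: "m \<subseteq> S" using mi unfolding ideal_def by auto
    have m0: "0 \<in> m" using mi zero_in_ideal by auto
    have mcl: "\<And>x y. x \<in> m \<Longrightarrow> y \<in> m \<Longrightarrow> x + y \<in> m" "\<And>r x. r \<in> S \<Longrightarrow> x \<in> m \<Longrightarrow> r * x \<in> m"
      using mi unfolding ideal_def by auto
    have "ideal S J" unfolding ideal_def
    proof (intro conjI ballI)
      show "J \<subseteq> S"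
      proof
        fix y assume "y \<in> J"
        then obtain n c where "n \<in> m" "c \<in> S" "y = n + a * c" using Jel by blast
        then show "y \<in> S" using mS ab sr[OF S] by auto
      qed
      have "0 + a * 0 \<in> J" using Jmem m0 sr01[OF S] by blast
      then show "0 \<in> J" by simp
    next
      fix y z assume "y \<in> J" "z \<in> J"
      obtain n1 c1 where h1: "n1 \<in> m" "c1 \<in> S" "y = n1 + a * c1" using Jel[OF \<open>y \<in> J\<close>] by blast
      obtain n2 c2 where h2: "n2 \<in> m" "c2 \<in> S" "z = n2 + a * c2" using Jel[OF \<open>z \<in> J\<close>] by blast
      note h = h1(1,2) h2(1,2) h1(3) h2(3)
      have "y + z = (n1 + n2) + a * (c1 + c2)" using h by (simp add: algebra_simps)
      moreover have "(n1 + n2) + a * (c1 + c2) \<in> J" by (rule Jmem) (use h mcl(1) sr(1)[OF S] in auto)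
      ultimately show "y + z \<in> J" by simp
    next
      fix r y assume r: "r \<in> S" "y \<in> J"
      obtain n1 c1 where h: "n1 \<in> m" "c1 \<in> S" "y = n1 + a * c1" using Jel[OF r(2)] by blast
      have "r * y = r * n1 + a * (r * c1)" using h by (simp add: algebra_simps)
      moreover have "r * n1 + a * (r * c1) \<in> J" by (rule Jmem) (use h mcl(2) r sr(3)[OF S] in auto)
      ultimately show "r * y \<in> J" by simp
    qed
    moreover have "m \<subseteq> J"
    proof
      fix y assume "y \<in> m"
      then have "y + a * 0 \<in> J" using Jmem sr01[OF S] by blast
      then show "y \<in> J" by simp
    qed
    moreover have "a \<in> J"
    proof -
      have "0 + a * 1 \<in> J" using Jmem m0 sr01[OF S] by blast
      then show ?thesis by simp
    qed
    ultimately have JJ: "ideal S J" "m \<subseteq> J" "a \<in> J" by blast+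
    have "1 \<in> J"
    proof (rule ccontr)
      assume "1 \<notin> J"
      then have "J = m" using mmax JJ by blast
      then show False using ab JJ by blast
    qed
    obtain n c where nc: "n \<in> m" "c \<in> S" "1 = n + a * c" using Jel[OF \<open>1 \<in> J\<close>] by blast
    have beq: "b = b * n + c * (a * b)"
    proof -
      have "b = b * (n + a * c)" using nc(3) by simp
      then show ?thesis by (simp add: algebra_simps)
    qed
    have "b * n \<in> m" using mcl(2)[of b n] nc ab by auto
    moreover have "c * (a * b) \<in> m" using mcl(2)[of c "a * b"] nc ab by auto
    ultimately have "b * n + c * (a * b) \<in> m" using mcl(1) by blast
    then have "b \<in> m" using beq by simp
    then show False using ab by auto
  qed
  then show ?thesis using mi unfolding prime_ideal_def by auto
qed

lemma exists_max: assumes S: "subring S" and s: "s \<in> S" and nu: "\<not> (\<exists>y\<in>S. s * y = 1)"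
  shows "\<exists>m. maximal_ideal S m \<and> s \<in> m"
proof -
  define A where "A = {I. ideal S I \<and> 1 \<notin> I \<and> s \<in> I}"
  define I where "I = {s * y | y. y \<in> S}"
  have Imem: "\<And>y. y \<in> S \<Longrightarrow> s * y \<in> I" unfolding I_def by blast
  have Iel: "\<And>z. z \<in> I \<Longrightarrow> \<exists>y. y \<in> S \<and> z = s * y" unfolding I_def by blast
  have "ideal S I" unfolding ideal_def
  proof (intro conjI ballI)
    show "I \<subseteq> S"
    proof
      fix z assume "z \<in> I"
      then obtain y where "y \<in> S" "z = s * y" using Iel by blast
      then show "z \<in> S" using s sr(3)[OF S] by simp
    qed
    have "s * 0 \<in> I" using Imem sr01[OF S] by blast
    then show "0 \<in> I" by simp
  next
    fix x z assume "x \<in> I" "z \<in> I"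
    obtain y1 where "y1 \<in> S" "x = s * y1" using Iel[OF \<open>x \<in> I\<close>] by blast
    moreover obtain y2 where "y2 \<in> S" "z = s * y2" using Iel[OF \<open>z \<in> I\<close>] by blast
    moreover have "s * (y1 + y2) \<in> I" using Imem sr(1)[OF S] calculation by blast
    ultimately show "x + z \<in> I" by (simp add: distrib_left)
  next
    fix r x assume "r \<in> S" "x \<in> I"
    obtain y1 where "y1 \<in> S" "x = s * y1" using Iel[OF \<open>x \<in> I\<close>] by blast
    moreover have "s * (r * y1) \<in> I" using Imem sr(3)[OF S] calculation \<open>r \<in> S\<close> by blast
    ultimately show "r * x \<in> I" by (simp add: mult.left_commute)
  qed
  moreover have "1 \<notin> I"
  proof
    assume "1 \<in> I"
    then obtain y where "y \<in> S" "1 = s * y" using Iel by blast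
    then show False using nu by auto
  qed
  moreover have "s \<in> I"
  proof -
    have "s * 1 \<in> I" using Imem sr01[OF S] by blast
    then show ?thesis by simp
  qed
  ultimately have I0: "I \<in> A" unfolding A_def by blast
  have "\<exists>M\<in>A. \<forall>X\<in>A. M \<subseteq> X \<longrightarrow> X = M"
  proof (rule subset_Zorn_nonempty)
    show "A \<noteq> {}" using I0 by auto
  next
    fix C assume C: "C \<noteq> {}" "subset.chain A C"
    then have CA: "C \<subseteq> A" and ch: "\<And>X Y. X \<in> C \<Longrightarrow> Y \<in> C \<Longrightarrow> X \<subseteq> Y \<or> Y \<subseteq> X"
      unfolding subset.chain_def by auto
    have mem: "\<And>X. X \<in> C \<Longrightarrow> ideal S X \<and> 1 \<notin> X \<and> s \<in> X" using CA unfolding A_def by auto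
    show "\<Union>C \<in> A" unfolding A_def ideal_def
    proof (intro CollectI conjI ballI)
      show "\<Union>C \<subseteq> S"
      proof
        fix x assume "x \<in> \<Union>C"
        then obtain X where "X \<in> C" "x \<in> X" by blast
        then show "x \<in> S" using mem[of X] ideal_sub by blast
      qed
      obtain X0 where "X0 \<in> C" using C(1) by blast
      then show "0 \<in> \<Union>C" using mem[of X0] zero_in_ideal by blast
      show "1 \<notin> \<Union>C" using mem by auto
      show "s \<in> \<Union>C" using mem \<open>X0 \<in> C\<close> by blast
    next
      fix x y assume "x \<in> \<Union>C" "y \<in> \<Union>C"
      then obtain X Y where "X \<in> C" "Y \<in> C" "x \<in> X" "y \<in> Y" by blast
      show "x + y \<in> \<Union>C"
      proof (cases "X \<subseteq> Y")
        case True
        then have "x + y \<in> Y" using ideal_add[of S Y x y] mem[of Y] \<open>Y \<in> C\<close> \<open>x \<in> X\<close> \<open>y \<in> Y\<close> by blast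
        then show ?thesis using \<open>Y \<in> C\<close> by blast
      next
        case False
        then have "Y \<subseteq> X" using ch[of X Y] \<open>Y \<in> C\<close> \<open>X \<in> C\<close> by blast
        then have "x + y \<in> X" using ideal_add[of S X x y] mem[of X] \<open>X \<in> C\<close> \<open>x \<in> X\<close> \<open>y \<in> Y\<close> by blast
        then show ?thesis using \<open>X \<in> C\<close> by blast
      qed
    next
      fix r x assume "r \<in> S" "x \<in> \<Union>C"
      then obtain X where "X \<in> C" "x \<in> X" by auto
      then have "r * x \<in> X" using mem[of X] \<open>r \<in> S\<close> ideal_mul by blast
      then show "r * x \<in> \<Union>C" using \<open>X \<in> C\<close> by blast
    qed
  qed
  then obtain M where M: "M \<in> A" "\<forall>X\<in>A. M \<subseteq> X \<longrightarrow> X = M" by auto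
  have "maximal_ideal S M" unfolding maximal_ideal_def
  proof (intro conjI allI impI)
    show "ideal S M" "1 \<notin> M" using M unfolding A_def by auto
  next
    fix J assume "ideal S J \<and> 1 \<notin> J \<and> M \<subseteq> J"
    then show "J = M" using M unfolding A_def by auto
  qed
  then show ?thesis using M unfolding A_def by auto
qed


theorem theorem3p10:
  fixes R :: "'a::field set"
  assumes "subring R"
    and "generalized_krull R"
  shows "perinormal R"
  unfolding perinormal_def
proof (intro allI impI)
  note R = assms(1)
  fix S assume H: "overring R S \<and> local_ring S \<and> going_down R S"
  have S: "subring S" and RS: "R \<subseteq> S" and Sf: "S \<subseteq> frac R" using H unfolding overring_def by auto
  have gd: "going_down R S" using H by auto
  obtain m where m: "maximal_ideal S m" and uniq: "\<And>m'. maximal_ideal S m' \<Longrightarrow> m' = m"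
    using H unfolding local_ring_def by metis
  have mp: "prime_ideal S m" using max_prime S m by blast
  have mi: "ideal S m" "1 \<notin> m" using m unfolding maximal_ideal_def by auto
  have mS: "m \<subseteq> S" using mi unfolding ideal_def by auto
  define p where "p = m \<inter> R"
  have pp: "prime_ideal R p"
    unfolding prime_ideal_def ideal_def
  proof (intro conjI ballI impI)
    show "p \<subseteq> R" unfolding p_def by auto
    show "0 \<in> p" unfolding p_def using zero_in_ideal[OF mi(1)] sr01[OF R] by auto
    show "1 \<notin> p" unfolding p_def using mi by auto
  next
    fix x y assume "x \<in> p" "y \<in> p" then show "x + y \<in> p"
      unfolding p_def using mi(1) sr[OF R] unfolding ideal_def by auto
  next
    fix r x assume "r \<in> R" "x \<in> p" then show "r * x \<in> p"
      unfolding p_def using mi(1) sr[OF R] RS unfolding ideal_def by auto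
  next
    fix a b assume "a \<in> R" "b \<in> R" "a * b \<in> p" then show "a \<in> p \<or> b \<in> p"
      unfolding p_def using mp RS unfolding prime_ideal_def by auto
  qed
  have p0: "0 \<in> p" "1 \<notin> p" "p \<subseteq> R" using pp unfolding prime_ideal_def ideal_def by auto
  have ms: "mult_set R (R - p)" unfolding mult_set_def
  proof (intro conjI ballI)
    show "R - p \<subseteq> R" by auto
    show "1 \<in> R - p" using p0 sr01[OF R] by auto
    show "0 \<notin> R - p" using p0 by auto
  next
    fix x y assume "x \<in> R - p" "y \<in> R - p" then show "x * y \<in> R - p"
      using pp sr[OF R] unfolding prime_ideal_def by auto
  qed
  have eq: "R = frac R \<inter> (\<Inter>P\<in>{P. height_one_prime R P}. loc R (R - P))"
    using assms(2) unfolding generalized_krull_def by blast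
  have K1: "y \<in> R" if "y \<in> frac R" "\<And>P. height_one_prime R P \<Longrightarrow> y \<in> loc R (R - P)" for y
  proof -
    have "y \<in> frac R \<inter> (\<Inter>P\<in>{P. height_one_prime R P}. loc R (R - P))" using that by auto
    moreover have "frac R \<inter> (\<Inter>P\<in>{P. height_one_prime R P}. loc R (R - P)) \<subseteq> R"
      using eq by (rule equalityD2)
    ultimately show ?thesis by blast
  qed
  have K2: "\<And>r. r \<in> R \<Longrightarrow> r \<noteq> 0 \<Longrightarrow> finite {P. height_one_prime R P \<and> r \<in> P}"
    using assms(2) unfolding generalized_krull_def by blast
  have K3: "\<And>P. height_one_prime R P \<Longrightarrow> valuation_domain (loc R (R - P))"
    using assms(2) unfolding generalized_krull_def by blast
  have htP: "prime_ideal R P" "1 \<notin> P" "0 \<in> P" "P \<subseteq> R" "subring (loc R (R - P))" "R \<subseteq> loc R (R - P)"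
    if "height_one_prime R P" for P
  proof -
    show pr: "prime_ideal R P" using that unfolding height_one_prime_def by auto
    show "1 \<notin> P" "0 \<in> P" "P \<subseteq> R" using pr unfolding prime_ideal_def ideal_def by auto
    then show "R \<subseteq> loc R (R - P)" using R_sub_loc[OF R] sr01[OF R] by auto
    show "subring (loc R (R - P))" using K3[OF that] unfolding valuation_domain_def by auto
  qed
  have sub1: "loc R (R - p) \<subseteq> S"
  proof
    fix x assume "x \<in> loc R (R - p)"
    then obtain a s where as: "a \<in> R" "s \<in> R - p" "x = a / s" unfolding mem_loc by auto
    have sS: "s \<in> S" using as RS by auto
    have snm: "s \<notin> m" using as unfolding p_def by auto
    have "\<exists>y\<in>S. s * y = 1"
    proof (rule ccontr)
      assume "\<not> ?thesis"
      then obtain m' where "maximal_ideal S m'" "s \<in> m'" using exists_max[OF S sS] by blast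
      then show False using uniq snm by blast
    qed
    then obtain y where y: "y \<in> S" "s * y = 1" by blast
    have "x = a * y" using as y by (metis divide_eq_eq mult.commute mult.left_commute mult_1_right mult_zero_left zero_neq_one)
    then show "x \<in> S" using sr[OF S] y as RS by auto
  qed
  have sub2: "S \<subseteq> loc R (R - p)"
  proof
    fix x assume xS: "x \<in> S"
    have xf: "x \<in> frac R" using xS Sf by auto
    then obtain a b where ab: "a \<in> R" "b \<in> R" "b \<noteq> 0" "x = a / b" unfolding frac_def by auto
    have inV: "x \<in> loc R (R - P)" if P: "height_one_prime R P" "P \<subseteq> p" for P
    proof (cases "P = p")
      case True
      have "m \<inter> R = P" using True p_def by simp
      then show ?thesis using key1[OF R htP(1)[OF P(1)] K3[OF P(1)] mi(1) RS Sf _ xS] by blast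
    next
      case False
      then have "P \<subset> p" using P by auto
      then obtain Q where Q: "prime_ideal S Q" "Q \<subseteq> m" "Q \<inter> R = P"
        using gd htP(1)[OF P(1)] pp mp unfolding going_down_def p_def by blast
      have "ideal S Q" using Q unfolding prime_ideal_def by auto
      then show ?thesis using key1[OF R htP(1)[OF P(1)] K3[OF P(1)] _ RS Sf Q(3) xS] by blast
    qed
    define F where "F = {P. height_one_prime R P \<and> b \<in> P \<and> \<not> P \<subseteq> p}"
    have fin: "finite F" using K2[OF ab(2,3)] unfolding F_def by (rule rev_finite_subset) auto
    have "\<forall>P\<in>F. \<exists>t. t \<in> R - p \<and> t * x \<in> loc R (R - P)"
    proof
      fix P assume "P \<in> F"
      then have P: "height_one_prime R P" "\<not> P \<subseteq> p" unfolding F_def by auto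
      then obtain s where s: "s \<in> P" "s \<notin> p" by auto
      have sR: "s \<in> R" using s htP(4)[OF P(1)] by auto
      have s0: "s \<noteq> 0" using s p0 by auto
      obtain k where "s ^ k * x \<in> loc R (R - P)" using key2[OF R P(1) K3[OF P(1)] s(1) s0 xf] by blast
      moreover have "s ^ k \<in> R - p" using sr_pow[OF R sR] prime_pow_notin[OF pp R sR s(2)] by auto
      ultimately show "\<exists>t. t \<in> R - p \<and> t * x \<in> loc R (R - P)" by blast
    qed
    then obtain T where T: "\<forall>P\<in>F. T P \<in> R - p \<and> T P * x \<in> loc R (R - P)" by metis
    define t where "t = prod T F"
    have tR: "t \<in> R - p" unfolding t_def using prime_prod_notin[OF pp R fin] T by auto
    have t0: "t \<noteq> 0" using tR p0 by auto
    have tx: "t * x \<in> loc R (R - P)" if P: "height_one_prime R P" for P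
    proof (cases "P \<in> F")
      case True
      have "t = prod T (F - {P}) * T P" unfolding t_def using prod.remove[OF fin True] by (simp add: mult.commute)
      then have "t * x = prod T (F - {P}) * (T P * x)" by simp
      moreover have "prod T (F - {P}) \<in> loc R (R - P)"
        using sr_prod[OF R, of "F - {P}" T] fin T htP(6)[OF P] by auto
      ultimately show ?thesis using mulV[OF htP(5)[OF P]] T True by blast
    next
      case False
      have "x \<in> loc R (R - P)"
      proof (cases "P \<subseteq> p")
        case True then show ?thesis using inV P by blast
      next
        case False
        then have "b \<notin> P" using \<open>P \<notin> F\<close> P unfolding F_def by auto
        then show ?thesis using ab unfolding mem_loc by auto
      qed
      moreover have "t \<in> loc R (R - P)" using tR htP(6)[OF P] by auto
      ultimately show ?thesis using mulV[OF htP(5)[OF P]] by blast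
    qed
    have txf: "t * x \<in> frac R"
    proof -
      have "t * x = (t * a) / b" using ab by simp
      moreover have "t * a \<in> R" using tR ab sr[OF R] by auto
      ultimately show ?thesis using fracI ab by metis
    qed
    have "t * x \<in> R" using K1[OF txf tx] by blast
    moreover have "x = (t * x) / t" using t0 by simp
    ultimately show "x \<in> loc R (R - p)" using tR unfolding mem_loc by blast
  qed
  show "\<exists>M. mult_set R M \<and> S = loc R M" using ms sub1 sub2 by blast
qed

end
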